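(* Let $S$ be an atomic base, let $\Gamma = x_1:A_1,\dots,x_n:A_n$ be a context and let $t$ be a term with $tFV(t)\subseteq\{x_1,\dots,x_n\}$. If the term $t$ of $A$ from $\Gamma$ is E-valid (with respect to $S$), then there is a normal proof-term $s$ (with respect to $S$) such that $t\twoheadrightarrow s$ and $\Gamma\vdash s:A$ is derivable in $\mathbf{IL}_{\mathbf{at}}$.
   Context: System $\mathbf{IL}_{\mathbf{at}}$ (atomic second-order intuitionistic propositional logic). Formulas: $A,B ::= X \mid A\to B \mid \forall X.A$, where $X$ ranges over atoms (propositional variables). Terms: $t,s ::= x \mid c^A \mid \lambda x.t \mid ts \mid \Lambda X.t \mid tX$, where $x$ ranges over term-variables, $c^A$ is a term-constant for each formula $A$, and in $tX$ the argument is an atom. Terms and formulas are taken up to $\alpha$-equivalence; $t[x:=s]$, $t[X:=Y]$, $A[X:=B]$ are capture-avoiding substitutions; $t[\vec{t_i}]$ denotes the simultaneous substitution $t[x_1:=t_1,\dots,x_n:=t_n]$. $tFV(t)$ is the set of free term-variables of $t$, $FV(t)$ the set of free term- and propositional variables. A term is closed if it has no free term-variable. A context is a finite set $x_1:A_1,\dots,x_n:A_n$ with distinct term-variables; $PFV(\Gamma)$ is the set of propositional variables free in $A_1,\dots,A_n$. $\Gamma\vdash t:A$ is derivable if generated by: $\Gamma,x:A\vdash x:A$; $\Gamma\vdash c^A:A$; from $\Gamma,x:A\vdash t:B$ infer $\Gamma\vdash\lambda x.t:A\to B$; from $\Gamma\vdash t:A\to B$ and $\Gamma\vdash s:A$ infer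 $\Gamma\vdash ts:B$; from $\Gamma\vdash t:A$ with $X\notin PFV(\Gamma)$ infer $\Gamma\vdash\Lambda X.t:\forall X.A$; from $\Gamma\vdash t:\forall X.A$ infer $\Gamma\vdash tY:A[X:=Y]$ for any atom $Y$. $\beta$-reduction $\to_\beta$: $(\lambda x.t)s\to_\beta t[x:=s]$, $(\Lambda X.t)Y\to_\beta t[X:=Y]$, closed under taking subterms in any position (application function/argument, under $\lambda$ and under $\Lambda$). A term is normal if it contains no redex (left-hand side of these two rules). $\twoheadrightarrow$ is the reflexive-transitive closure of $\to_\beta$. An atomic base $S$ is a set of term-constants $c^X$ for atoms $X$. A proof-term is a term in which no term-constant occurs other than those $c^X\in S$. qE-validity: (1) a closed term $t$ of an atom $X$ is qE-valid iff $t\twoheadrightarrow s$ for some normal $s$ with $\vdash s:X$ derivable; (2) a closed term $t$ of $B\to C$ is qE-valid iff $ts$ of $C$ is qE-valid for every qE-valid closed term $s$ of $B$; (3) a closed term $t$ of $\forall X.A$ is qE-valid iff $tY$ of $A[X:=Y]$ is qE-valid for every atom $Y$; (4) a term $t$ of $A$ from $x_1:A_1,\dots,x_n:A_n$ with $tFV(t)\subseteq\{x_1,\dots,x_n\}$ is qE-valid iff $t[\vec{t_i}]$ of $A$ is qE-valid for all qE-valid closed terms $t_i$ of $A_i$ ($1\le i\le n$). A term is E-valid iff it is a proof-term and qE-valid. *)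

theory Defs
  imports Main
begin

text \<open>System IL_at in locally de Bruijn style: bound atoms and bound term-variables
are de Bruijn indices; this represents terms and formulas up to alpha-equivalence.
Free atoms are the atom indices not bound by an enclosing binder (index minus depth);
free term-variables likewise.\<close>

datatype form = Atom nat | Imp form form | All form

datatype trm = Var nat | Const form | Lam trm | App trm trm | TLam trm | TApp trm nat

definition upr :: "(nat \<Rightarrow> nat) \<Rightarrow> nat \<Rightarrow> nat" where
  "upr f = (\<lambda>n. case n of 0 \<Rightarrow> 0 | Suc m \<Rightarrow> Suc (f m))"

fun renF :: "(nat \<Rightarrow> nat) \<Rightarrow> form \<Rightarrow> form" where
  "renF f (Atom n) = Atom (f n)"
| "renF f (Imp A B) = Imp (renF f A) (renF f B)"
| "renF f (All A) = All (renF (upr f) A)"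

lemma size_renF[simp]: "size (renF f A) = size A"
  by (induction A arbitrary: f) auto

text \<open>instF Y A: for the body A of All A, this is A[X:=Y] (X the bound atom).\<close>
definition instF :: "nat \<Rightarrow> form \<Rightarrow> form" where
  "instF Y A = renF (\<lambda>n. case n of 0 \<Rightarrow> Y | Suc m \<Rightarrow> m) A"

lemma size_instF[simp]: "size (instF Y A) = size A"
  by (simp add: instF_def)

fun renT :: "(nat \<Rightarrow> nat) \<Rightarrow> trm \<Rightarrow> trm" where
  "renT f (Var i) = Var i"
| "renT f (Const A) = Const (renF f A)"
| "renT f (Lam t) = Lam (renT f t)"
| "renT f (App t s) = App (renT f t) (renT f s)"
| "renT f (TLam t) = TLam (renT (upr f) t)"
| "renT f (TApp t Y) = TApp (renT f t) (f Y)"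

fun renV :: "(nat \<Rightarrow> nat) \<Rightarrow> trm \<Rightarrow> trm" where
  "renV f (Var i) = Var (f i)"
| "renV f (Const A) = Const A"
| "renV f (Lam t) = Lam (renV (upr f) t)"
| "renV f (App t s) = App (renV f t) (renV f s)"
| "renV f (TLam t) = TLam (renV f t)"
| "renV f (TApp t Y) = TApp (renV f t) Y"

fun substV :: "(nat \<Rightarrow> trm) \<Rightarrow> trm \<Rightarrow> trm" where
  "substV \<sigma> (Var i) = \<sigma> i"
| "substV \<sigma> (Const A) = Const A"
| "substV \<sigma> (Lam t) = Lam (substV (\<lambda>i. case i of 0 \<Rightarrow> Var 0 | Suc j \<Rightarrow> renV Suc (\<sigma> j)) t)"
| "substV \<sigma> (App t s) = App (substV \<sigma> t) (substV \<sigma> s)"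
| "substV \<sigma> (TLam t) = TLam (substV (\<lambda>i. renT Suc (\<sigma> i)) t)"
| "substV \<sigma> (TApp t Y) = TApp (substV \<sigma> t) Y"

fun tfv :: "trm \<Rightarrow> nat set" where
  "tfv (Var i) = {i}"
| "tfv (Const A) = {}"
| "tfv (Lam t) = {i. Suc i \<in> tfv t}"
| "tfv (App t s) = tfv t \<union> tfv s"
| "tfv (TLam t) = tfv t"
| "tfv (TApp t Y) = tfv t"

definition closed :: "trm \<Rightarrow> bool" where
  "closed t \<longleftrightarrow> tfv t = {}"

text \<open>Typing judgement Gamma |- t : A; the context is a list, position i typing Var i.
The eigenvariable condition for TLam is realised by shifting the context.\<close>
inductive typing :: "form list \<Rightarrow> trm \<Rightarrow> form \<Rightarrow> bool" where
  tVar: "i < length \<Gamma> \<Longrightarrow> typing \<Gamma> (Var i) (\<Gamma> ! i)"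
| tConst: "typing \<Gamma> (Const A) A"
| tLam: "typing (A # \<Gamma>) t B \<Longrightarrow> typing \<Gamma> (Lam t) (Imp A B)"
| tApp: "typing \<Gamma> t (Imp A B) \<Longrightarrow> typing \<Gamma> s A \<Longrightarrow> typing \<Gamma> (App t s) B"
| tTLam: "typing (map (renF Suc) \<Gamma>) t A \<Longrightarrow> typing \<Gamma> (TLam t) (All A)"
| tTApp: "typing \<Gamma> t (All A) \<Longrightarrow> typing \<Gamma> (TApp t Y) (instF Y A)"

inductive beta :: "trm \<Rightarrow> trm \<Rightarrow> bool" where
  bLam: "beta (App (Lam t) s) (substV (\<lambda>i. case i of 0 \<Rightarrow> s | Suc j \<Rightarrow> Var j) t)"
| bTLam: "beta (TApp (TLam t) Y) (renT (\<lambda>n. case n of 0 \<Rightarrow> Y | Suc m \<Rightarrow> m) t)"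
| cAppL: "beta t t' \<Longrightarrow> beta (App t s) (App t' s)"
| cAppR: "beta s s' \<Longrightarrow> beta (App t s) (App t s')"
| cLam: "beta t t' \<Longrightarrow> beta (Lam t) (Lam t')"
| cTLam: "beta t t' \<Longrightarrow> beta (TLam t) (TLam t')"
| cTApp: "beta t t' \<Longrightarrow> beta (TApp t Y) (TApp t' Y)"

abbreviation betas :: "trm \<Rightarrow> trm \<Rightarrow> bool" where
  "betas \<equiv> beta\<^sup>*\<^sup>*"

fun normal :: "trm \<Rightarrow> bool" where
  "normal (Var i) = True"
| "normal (Const A) = True"
| "normal (Lam t) = normal t"
| "normal (App t s) = (normal t \<and> normal s \<and> (\<forall>u. t \<noteq> Lam u))"
| "normal (TLam t) = normal t"
| "normal (TApp t Y) = (normal t \<and> (\<forall>u. t \<noteq> TLam u))"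

text \<open>Proof-terms w.r.t. an atomic base S (S = set of atoms X with c^X in the base):
every constant occurring is c^X for a free atom X (index minus binder depth d) with X in S.\<close>
fun ptd :: "nat set \<Rightarrow> nat \<Rightarrow> trm \<Rightarrow> bool" where
  "ptd S d (Var i) = True"
| "ptd S d (Const A) = (\<exists>X. A = Atom X \<and> d \<le> X \<and> X - d \<in> S)"
| "ptd S d (Lam t) = ptd S d t"
| "ptd S d (App t s) = (ptd S d t \<and> ptd S d s)"
| "ptd S d (TLam t) = ptd S (Suc d) t"
| "ptd S d (TApp t Y) = ptd S d t"

definition proof_term :: "nat set \<Rightarrow> trm \<Rightarrow> bool" where
  "proof_term S t \<longleftrightarrow> ptd S 0 t"

function qEc :: "form \<Rightarrow> trm \<Rightarrow> bool" where
  "qEc (Atom X) t = (\<exists>s. betas t s \<and> normal s \<and> typing [] s (Atom X))"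
| "qEc (Imp B C) t = (\<forall>s. closed s \<longrightarrow> qEc B s \<longrightarrow> qEc C (App t s))"
| "qEc (All A) t = (\<forall>Y. qEc (instF Y A) (TApp t Y))"
  by pat_completeness auto
termination by (relation "measure (\<lambda>(A, t). size A)") auto

definition qEv :: "form list \<Rightarrow> trm \<Rightarrow> form \<Rightarrow> bool" where
  "qEv \<Gamma> t A \<longleftrightarrow> tfv t \<subseteq> {..<length \<Gamma>} \<and>
     (\<forall>ts. length ts = length \<Gamma> \<longrightarrow>
        (\<forall>i<length \<Gamma>. closed (ts ! i) \<and> qEc (\<Gamma> ! i) (ts ! i)) \<longrightarrow>
        qEc A (substV (\<lambda>i. if i < length ts then ts ! i else Var i) t))"

definition Evalid :: "nat set \<Rightarrow> form list \<Rightarrow> trm \<Rightarrow> form \<Rightarrow> bool" where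
  "Evalid S \<Gamma> t A \<longleftrightarrow> proof_term S t \<and> qEv \<Gamma> t A"

end

theory Submission imports Defs begin

lemma upr_0[simp]: "upr f 0 = 0" and upr_Suc[simp]: "upr f (Suc n) = Suc (f n)"
  by (simp_all add: upr_def)

lemma upr_ext: "(\<And>n. f n = g n) \<Longrightarrow> upr f n = upr g n"
  by (cases n) auto

lemma renF_cong: "(\<And>n. f n = g n) \<Longrightarrow> renF f A = renF g A"
  by (metis ext)
lemma renT_cong: "(\<And>n. f n = g n) \<Longrightarrow> renT f A = renT g A"
  by (metis ext)
lemma renV_cong: "(\<And>n. f n = g n) \<Longrightarrow> renV f A = renV g A"
  by (metis ext)
lemma substV_cong: "(\<And>n. f n = g n) \<Longrightarrow> substV f A = substV g A"
  by (metis ext)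

lemma renF_comp: "renF f (renF g A) = renF (\<lambda>n. f (g n)) A"
proof (induction A arbitrary: f g)
  case (All A)
  then show ?case by (simp, intro renF_cong, simp add: upr_def split: nat.split)
qed simp_all

lemma renF_id: "renF (\<lambda>n. n) A = A"
proof (induction A)
  case (All A)
  have "upr (\<lambda>n. n) = (\<lambda>n. n)" by (rule ext) (simp add: upr_def split: nat.split)
  then show ?case using All by simp
qed simp_all

lemma renT_comp: "renT f (renT g t) = renT (\<lambda>n. f (g n)) t"
proof (induction t arbitrary: f g)
  case (TLam t)
  then show ?case by (simp, intro renT_cong, simp add: upr_def split: nat.split)
qed (simp_all add: renF_comp)

lemma renT_id: "renT (\<lambda>n. n) t = t"
proof (induction t)
  case (TLam t)
  have "upr (\<lambda>n. n) = (\<lambda>n. n)" by (rule ext) (simp add: upr_def split: nat.split)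
  then show ?case using TLam by simp
qed (simp_all add: renF_id)

lemma renV_comp: "renV f (renV g t) = renV (\<lambda>n. f (g n)) t"
proof (induction t arbitrary: f g)
  case (Lam t)
  then show ?case by (simp, intro renV_cong, simp add: upr_def split: nat.split)
qed simp_all

lemma renT_renV: "renT f (renV g t) = renV g (renT f t)"
  by (induction t arbitrary: f g) simp_all

lemma subst_renV: "substV \<sigma> (renV f t) = substV (\<lambda>n. \<sigma> (f n)) t"
proof (induction t arbitrary: \<sigma> f)
  case (Lam t)
  then show ?case by (simp, intro substV_cong, simp add: upr_def split: nat.split)
qed simp_all

lemma renV_subst: "renV f (substV \<sigma> t) = substV (\<lambda>n. renV f (\<sigma> n)) t"
proof (induction t arbitrary: \<sigma> f)
  case (Lam t)
  then show ?case by (simp, intro substV_cong, simp add: renV_comp split: nat.split)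
next
  case (TLam t)
  then show ?case by (simp add: renT_renV)
qed simp_all

lemma renT_subst: "renT g (substV \<sigma> t) = substV (\<lambda>n. renT g (\<sigma> n)) (renT g t)"
proof (induction t arbitrary: \<sigma> g)
  case (Lam t)
  then show ?case by (simp, intro substV_cong, simp add: renT_renV split: nat.split)
next
  case (TLam t)
  then show ?case by (simp, intro substV_cong, simp add: renT_comp)
qed simp_all

lemma subst_subst: "substV \<tau> (substV \<rho> t) = substV (\<lambda>i. substV \<tau> (\<rho> i)) t"
proof (induction t arbitrary: \<tau> \<rho>)
  case (Lam t)
  then show ?case by (simp, intro substV_cong, simp add: subst_renV renV_subst split: nat.split)
next
  case (TLam t)
  then show ?case by (simp, intro substV_cong, simp add: renT_subst)
qed simp_all


inductive_cases betaE_Var[elim!]: "beta (Var i) u"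
inductive_cases betaE_Const[elim!]: "beta (Const A) u"
inductive_cases betaE_Lam[elim!]: "beta (Lam t) u"
inductive_cases betaE_TLam[elim!]: "beta (TLam t) u"
inductive_cases betaE_App0: "beta (App t s) u"
inductive_cases betaE_TApp0: "beta (TApp t Y) u"
lemmas betaE_App[consumes 1, case_names bLam cAppL cAppR] = betaE_App0
lemmas betaE_TApp[consumes 1, case_names bTLam cTApp] = betaE_TApp0

lemma subst_Var: "substV Var t = t"
proof (induction t)
  case (Lam t)
  have "case_nat (Var 0) (\<lambda>j. Var (Suc j)) = Var"
    by (rule ext) (simp split: nat.split)
  then show ?case using Lam by simp
qed simp_all

definition inert :: "(nat \<Rightarrow> trm) \<Rightarrow> bool" where
  "inert \<sigma> \<longleftrightarrow> (\<forall>i. (\<exists>k. \<sigma> i = Var k) \<or> (\<exists>A. \<sigma> i = Const A))"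

lemma inert_lift: "inert \<sigma> \<Longrightarrow> inert (\<lambda>i. case i of 0 \<Rightarrow> Var 0 | Suc j \<Rightarrow> renV Suc (\<sigma> j))"
  unfolding inert_def by (auto split: nat.split) (metis renV.simps(1,2))

lemma inert_tlift: "inert \<sigma> \<Longrightarrow> inert (\<lambda>i. renT Suc (\<sigma> i))"
  unfolding inert_def by (metis renT.simps(1,2))

lemma inert_Lam: "inert \<sigma> \<Longrightarrow> \<sigma> i \<noteq> Lam r"
  unfolding inert_def by (metis trm.distinct)

lemma inert_TLam: "inert \<sigma> \<Longrightarrow> \<sigma> i \<noteq> TLam r"
  unfolding inert_def by (metis trm.distinct)

lemma subst_eq_Lam: "inert \<sigma> \<Longrightarrow> substV \<sigma> t = Lam r \<Longrightarrow>
   \<exists>r1. t = Lam r1 \<and> r = substV (\<lambda>i. case i of 0 \<Rightarrow> Var 0 | Suc j \<Rightarrow> renV Suc (\<sigma> j)) r1"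
  by (cases t) (auto dest: inert_Lam)

lemma subst_eq_TLam: "inert \<sigma> \<Longrightarrow> substV \<sigma> t = TLam r \<Longrightarrow>
   \<exists>r1. t = TLam r1 \<and> r = substV (\<lambda>i. renT Suc (\<sigma> i)) r1"
  by (cases t) (auto dest: inert_TLam)

lemma beta_subst_lift: "beta (substV \<sigma> t) u \<Longrightarrow> inert \<sigma> \<Longrightarrow> \<exists>t'. beta t t' \<and> u = substV \<sigma> t'"
proof (induction t arbitrary: \<sigma> u)
  case (Var x)
  have nb: "\<not> beta (Var k) u" "\<not> beta (Const B) u" for k B u by auto
  from Var.prems(2) have "(\<exists>k. \<sigma> x = Var k) \<or> (\<exists>A. \<sigma> x = Const A)" unfolding inert_def by blast
  then show ?case using Var.prems(1) nb by auto
next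
  case (Const x)
  then show ?case by auto
next
  case (Lam t)
  from Lam.prems obtain t1 where "beta (substV (\<lambda>i. case i of 0 \<Rightarrow> Var 0 | Suc j \<Rightarrow> renV Suc (\<sigma> j)) t) t1" "u = Lam t1" by auto
  moreover from this(1) Lam.IH[OF _ inert_lift[OF Lam.prems(2)]] obtain t' where
    "beta t t'" "t1 = substV (\<lambda>i. case i of 0 \<Rightarrow> Var 0 | Suc j \<Rightarrow> renV Suc (\<sigma> j)) t'" by blast
  ultimately show ?case by (intro exI[of _ "Lam t'"]) (auto intro: beta.cLam)
next
  case (TLam t)
  from TLam.prems obtain t1 where "beta (substV (\<lambda>i. renT Suc (\<sigma> i)) t) t1" "u = TLam t1" by auto
  moreover from this(1) TLam.IH[OF _ inert_tlift[OF TLam.prems(2)]] obtain t' where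
    "beta t t'" "t1 = substV (\<lambda>i. renT Suc (\<sigma> i)) t'" by blast
  ultimately show ?case by (intro exI[of _ "TLam t'"]) (auto intro: beta.cTLam)
next
  case (App t1 t2)
  from App.prems(1) have "beta (App (substV \<sigma> t1) (substV \<sigma> t2)) u" by simp
  then show ?case
  proof (cases rule: betaE_App)
    case (bLam r)
    from subst_eq_Lam[OF App.prems(2) bLam(1)] obtain r1 where
      r1: "t1 = Lam r1" "r = substV (\<lambda>i. case i of 0 \<Rightarrow> Var 0 | Suc j \<Rightarrow> renV Suc (\<sigma> j)) r1" by blast
    let ?t' = "substV (\<lambda>i. case i of 0 \<Rightarrow> t2 | Suc j \<Rightarrow> Var j) r1"
    have "beta t1' ?t'" if "t1' = App t1 t2" for t1' using that r1 by (simp add: beta.bLam)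
    moreover have "u = substV \<sigma> ?t'"
      unfolding bLam(2) r1(2) subst_subst
      by (rule substV_cong) (simp add: subst_renV subst_Var split: nat.split)
    ultimately show ?thesis by blast
  next
    case (cAppL t')
    then show ?thesis using App by (metis beta.cAppL substV.simps(4))
  next
    case (cAppR s')
    then show ?thesis using App by (metis beta.cAppR substV.simps(4))
  qed
next
  case (TApp t1 Y)
  from TApp.prems(1) have "beta (TApp (substV \<sigma> t1) Y) u" by simp
  then show ?case
  proof (cases rule: betaE_TApp)
    case (bTLam r)
    from subst_eq_TLam[OF TApp.prems(2) bTLam(1)] obtain r1 where
      r1: "t1 = TLam r1" "r = substV (\<lambda>i. renT Suc (\<sigma> i)) r1" by blast
    let ?t' = "renT (\<lambda>n. case n of 0 \<Rightarrow> Y | Suc m \<Rightarrow> m) r1"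
    have "beta (TApp t1 Y) ?t'" using r1 by (simp add: beta.bTLam)
    moreover have "u = substV \<sigma> ?t'"
      unfolding bTLam(2) r1(2) renT_subst renT_comp by (simp add: renT_id)
    ultimately show ?thesis by auto
  next
    case (cTApp t')
    then show ?thesis using TApp by (metis beta.cTApp substV.simps(6))
  qed
qed

lemma betas_subst_lift: "betas (substV \<sigma> t) u \<Longrightarrow> inert \<sigma> \<Longrightarrow> \<exists>t'. betas t t' \<and> u = substV \<sigma> t'"
proof (induction rule: rtranclp_induct)
  case base
  then show ?case by blast
next
  case (step y z)
  then obtain t' where "betas t t'" "y = substV \<sigma> t'" by blast
  with beta_subst_lift[of \<sigma> t' z] step show ?case by (meson rtranclp.rtrancl_into_rtrancl)
qed

lemma renT_eq_Lam: "renT \<rho> t = Lam r \<Longrightarrow> \<exists>r1. t = Lam r1 \<and> r = renT \<rho> r1"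
  by (cases t) auto

lemma renT_eq_TLam: "renT \<rho> t = TLam r \<Longrightarrow> \<exists>r1. t = TLam r1 \<and> r = renT (upr \<rho>) r1"
  by (cases t) auto

lemma beta_renT_lift: "beta (renT \<rho> t) u \<Longrightarrow> \<exists>t'. beta t t' \<and> u = renT \<rho> t'"
proof (induction t arbitrary: \<rho> u)
  case (Lam t)
  from Lam.prems obtain t1 where "beta (renT \<rho> t) t1" "u = Lam t1" by auto
  moreover from this(1) Lam.IH obtain t' where "beta t t'" "t1 = renT \<rho> t'" by blast
  ultimately show ?case by (intro exI[of _ "Lam t'"]) (auto intro: beta.cLam)
next
  case (TLam t)
  from TLam.prems obtain t1 where "beta (renT (upr \<rho>) t) t1" "u = TLam t1" by auto
  moreover from this(1) TLam.IH obtain t' where "beta t t'" "t1 = renT (upr \<rho>) t'" by blast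
  ultimately show ?case by (intro exI[of _ "TLam t'"]) (auto intro: beta.cTLam)
next
  case (App t1 t2)
  from App.prems(1) have "beta (App (renT \<rho> t1) (renT \<rho> t2)) u" by simp
  then show ?case
  proof (cases rule: betaE_App)
    case (bLam r)
    from renT_eq_Lam[OF bLam(1)] obtain r1 where
      r1: "t1 = Lam r1" "r = renT \<rho> r1" by blast
    let ?t' = "substV (\<lambda>i. case i of 0 \<Rightarrow> t2 | Suc j \<Rightarrow> Var j) r1"
    have "beta (App t1 t2) ?t'" using r1 by (simp add: beta.bLam)
    moreover have "u = renT \<rho> ?t'"
      unfolding bLam(2) r1(2) renT_subst
      by (rule substV_cong) (simp split: nat.split)
    ultimately show ?thesis by blast
  next
    case (cAppL t')
    then show ?thesis using App by (metis beta.cAppL renT.simps(4))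
  next
    case (cAppR s')
    then show ?thesis using App by (metis beta.cAppR renT.simps(4))
  qed
next
  case (TApp t1 Y)
  from TApp.prems(1) have "beta (TApp (renT \<rho> t1) (\<rho> Y)) u" by simp
  then show ?case
  proof (cases rule: betaE_TApp)
    case (bTLam r)
    from renT_eq_TLam[OF bTLam(1)] obtain r1 where
      r1: "t1 = TLam r1" "r = renT (upr \<rho>) r1" by blast
    let ?t' = "renT (\<lambda>n. case n of 0 \<Rightarrow> Y | Suc m \<Rightarrow> m) r1"
    have "beta (TApp t1 Y) ?t'" using r1 by (simp add: beta.bTLam)
    moreover have "u = renT \<rho> ?t'"
      unfolding bTLam(2) r1(2) renT_comp
      by (rule renT_cong) (simp add: upr_def split: nat.split)
    ultimately show ?thesis by auto
  next
    case (cTApp t')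
    then show ?thesis using TApp by (metis beta.cTApp renT.simps(6))
  qed
qed auto

lemma betas_renT_lift: "betas (renT \<rho> t) u \<Longrightarrow> \<exists>t'. betas t t' \<and> u = renT \<rho> t'"
proof (induction rule: rtranclp_induct)
  case base
  then show ?case by blast
next
  case (step y z)
  then obtain t' where "betas t t'" "y = renT \<rho> t'" by blast
  with beta_renT_lift[of \<rho> t' z] step show ?case by (meson rtranclp.rtrancl_into_rtrancl)
qed

lemma normal_subst: "normal (substV \<sigma> t) \<Longrightarrow> normal t"
proof (induction t arbitrary: \<sigma>)
  case (App t1 t2)
  then show ?case by (cases t1) auto
next
  case (TApp t1 Y)
  then show ?case by (cases t1) auto
qed auto

lemma normal_renT: "normal (renT \<rho> t) \<Longrightarrow> normal t"
proof (induction t arbitrary: \<rho>)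
  case (App t1 t2)
  then show ?case by (cases t1) auto
next
  case (TApp t1 Y)
  then show ?case by (cases t1) auto
qed auto


inductive_cases tyE_Var[elim!]: "typing \<Gamma> (Var i) A"
inductive_cases tyE_Const[elim!]: "typing \<Gamma> (Const B) A"
inductive_cases tyE_Lam[elim!]: "typing \<Gamma> (Lam t) A"
inductive_cases tyE_App[elim!]: "typing \<Gamma> (App t s) A"
inductive_cases tyE_TLam[elim!]: "typing \<Gamma> (TLam t) A"
inductive_cases tyE_TApp[elim!]: "typing \<Gamma> (TApp t Y) A"

definition okS :: "form list \<Rightarrow> form list \<Rightarrow> (nat \<Rightarrow> trm) \<Rightarrow> bool" where
  "okS \<Gamma> \<Delta> \<sigma> \<longleftrightarrow> (\<forall>i. (\<exists>k. \<sigma> i = Var k \<and> (k < length \<Delta> \<longrightarrow> i < length \<Gamma> \<and> \<Delta> ! k = \<Gamma> ! i))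
      \<or> (i < length \<Gamma> \<and> \<sigma> i = Const (\<Gamma> ! i)))"

lemma okS_lift: "okS \<Gamma> \<Delta> \<sigma> \<Longrightarrow>
  okS (A # \<Gamma>) (A # \<Delta>) (\<lambda>i. case i of 0 \<Rightarrow> Var 0 | Suc j \<Rightarrow> renV Suc (\<sigma> j))"
  unfolding okS_def
proof (intro allI)
  fix i assume H: "\<forall>i. (\<exists>k. \<sigma> i = Var k \<and> (k < length \<Delta> \<longrightarrow> i < length \<Gamma> \<and> \<Delta> ! k = \<Gamma> ! i))
      \<or> (i < length \<Gamma> \<and> \<sigma> i = Const (\<Gamma> ! i))"
  show "(\<exists>k. (case i of 0 \<Rightarrow> Var 0 | Suc j \<Rightarrow> renV Suc (\<sigma> j)) = Var k \<and>
              (k < length (A # \<Delta>) \<longrightarrow> i < length (A # \<Gamma>) \<and> (A # \<Delta>) ! k = (A # \<Gamma>) ! i)) \<or>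
         i < length (A # \<Gamma>) \<and> (case i of 0 \<Rightarrow> Var 0 | Suc j \<Rightarrow> renV Suc (\<sigma> j)) = Const ((A # \<Gamma>) ! i)"
  proof (cases i)
    case 0 then show ?thesis by simp
  next
    case (Suc j)
    from H[rule_format, of j] show ?thesis
    proof
      assume "\<exists>k. \<sigma> j = Var k \<and> (k < length \<Delta> \<longrightarrow> j < length \<Gamma> \<and> \<Delta> ! k = \<Gamma> ! j)"
      then obtain k where "\<sigma> j = Var k" "k < length \<Delta> \<longrightarrow> j < length \<Gamma> \<and> \<Delta> ! k = \<Gamma> ! j" by blast
      then show ?thesis using Suc by (intro disjI1 exI[of _ "Suc k"]) simp
    qed (simp add: Suc)
  qed
qed

lemma okS_tlift: "okS \<Gamma> \<Delta> \<sigma> \<Longrightarrow>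
  okS (map (renF Suc) \<Gamma>) (map (renF Suc) \<Delta>) (\<lambda>i. renT Suc (\<sigma> i))"
  unfolding okS_def
proof (intro allI)
  fix i assume H: "\<forall>i. (\<exists>k. \<sigma> i = Var k \<and> (k < length \<Delta> \<longrightarrow> i < length \<Gamma> \<and> \<Delta> ! k = \<Gamma> ! i))
      \<or> (i < length \<Gamma> \<and> \<sigma> i = Const (\<Gamma> ! i))"
  from H[rule_format, of i]
  show "(\<exists>k. renT Suc (\<sigma> i) = Var k \<and>
              (k < length (map (renF Suc) \<Delta>) \<longrightarrow> i < length (map (renF Suc) \<Gamma>) \<and> map (renF Suc) \<Delta> ! k = map (renF Suc) \<Gamma> ! i)) \<or>
         i < length (map (renF Suc) \<Gamma>) \<and> renT Suc (\<sigma> i) = Const (map (renF Suc) \<Gamma> ! i)"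
    by auto
qed

lemma rev_typing: "typing \<Delta> (substV \<sigma> t) B \<Longrightarrow> okS \<Gamma> \<Delta> \<sigma> \<Longrightarrow> typing \<Gamma> t B"
proof (induction t arbitrary: \<Gamma> \<Delta> \<sigma> B)
  case (Var i)
  from Var.prems(2) have "(\<exists>k. \<sigma> i = Var k \<and> (k < length \<Delta> \<longrightarrow> i < length \<Gamma> \<and> \<Delta> ! k = \<Gamma> ! i))
      \<or> (i < length \<Gamma> \<and> \<sigma> i = Const (\<Gamma> ! i))" unfolding okS_def by blast
  then show ?case using Var.prems(1) by (auto simp: typing.tVar)
next
  case (Const x)
  then show ?case by (auto intro: typing.tConst)
next
  case (Lam t)
  from Lam.prems(1) obtain A C where "B = Imp A C"
    "typing (A # \<Delta>) (substV (\<lambda>i. case i of 0 \<Rightarrow> Var 0 | Suc j \<Rightarrow> renV Suc (\<sigma> j)) t) C" by auto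
  with Lam.IH[OF _ okS_lift[OF Lam.prems(2)]] show ?case by (auto intro: typing.tLam)
next
  case (App t1 t2)
  from App.prems(1) obtain A where "typing \<Delta> (substV \<sigma> t1) (Imp A B)" "typing \<Delta> (substV \<sigma> t2) A" by auto
  then show ?case using App.IH App.prems(2) by (meson typing.tApp)
next
  case (TLam t)
  from TLam.prems(1) obtain C where "B = All C"
    "typing (map (renF Suc) \<Delta>) (substV (\<lambda>i. renT Suc (\<sigma> i)) t) C" by auto
  with TLam.IH[OF _ okS_tlift[OF TLam.prems(2)]] show ?case by (auto intro: typing.tTLam)
next
  case (TApp t Y)
  then show ?case by (auto intro: typing.tTApp)
qed

lemma instF_ren: "renF f (instF Y A) = instF (f Y) (renF (upr f) A)"
  unfolding instF_def renF_comp by (rule renF_cong) (simp split: nat.split)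

lemma typing_renT: "typing \<Gamma> t A \<Longrightarrow> typing (map (renF f) \<Gamma>) (renT f t) (renF f A)"
proof (induction arbitrary: f rule: typing.induct)
  case (tVar i \<Gamma>)
  then show ?case by (metis length_map nth_map renT.simps(1) typing.tVar)
next
  case (tConst \<Gamma> A)
  then show ?case by (auto intro: typing.intros)
next
  case (tLam A \<Gamma> t B)
  then show ?case by (auto intro: typing.intros)
next
  case (tApp \<Gamma> t A B s)
  then show ?case by (auto intro: typing.intros)
next
  case (tTLam \<Gamma> t A)
  have eq: "map (renF (upr f)) (map (renF Suc) \<Gamma>) = map (renF Suc) (map (renF f) \<Gamma>)"
    by (simp add: renF_comp)
  from tTLam.IH[of "upr f"] have "typing (map (renF Suc) (map (renF f) \<Gamma>)) (renT (upr f) t) (renF (upr f) A)"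
    unfolding eq .
  then show ?case by (simp add: typing.tTLam)
next
  case (tTApp \<Gamma> t A Y)
  then show ?case by (auto simp: instF_ren intro: typing.intros)
qed


fun faF :: "form \<Rightarrow> nat set" where
  "faF (Atom n) = {n}"
| "faF (Imp A B) = faF A \<union> faF B"
| "faF (All A) = {n. Suc n \<in> faF A}"

fun faT :: "trm \<Rightarrow> nat set" where
  "faT (Var i) = {}"
| "faT (Const A) = faF A"
| "faT (Lam t) = faT t"
| "faT (App t s) = faT t \<union> faT s"
| "faT (TLam t) = {n. Suc n \<in> faT t}"
| "faT (TApp t Y) = insert Y (faT t)"

lemma finite_pred: "finite S \<Longrightarrow> finite {n. Suc n \<in> S}"
  using finite_vimageI[of S Suc] by (simp add: vimage_def)

lemma finite_faF: "finite (faF A)"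
  by (induction A) (auto intro: finite_pred)

lemma finite_faT: "finite (faT t)"
  by (induction t) (auto intro: finite_pred finite_faF)

lemma pred_upr_image: "{n. Suc n \<in> upr f ` S} = f ` {n. Suc n \<in> S}"
proof (rule set_eqI, rule iffI)
  fix n assume "n \<in> {n. Suc n \<in> upr f ` S}"
  then obtain x where "x \<in> S" "Suc n = upr f x" by blast
  then show "n \<in> f ` {n. Suc n \<in> S}" by (cases x) auto
next
  fix n assume "n \<in> f ` {n. Suc n \<in> S}"
  then obtain m where "Suc m \<in> S" "n = f m" by blast
  then have "upr f (Suc m) = Suc n" by simp
  with \<open>Suc m \<in> S\<close> show "n \<in> {n. Suc n \<in> upr f ` S}" by (metis (mono_tags) image_eqI mem_Collect_eq)
qed

lemma faF_renF: "faF (renF f A) = f ` faF A"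
  by (induction A arbitrary: f) (auto simp: pred_upr_image image_Un)

lemma faT_renT: "faT (renT f t) = f ` faT t"
  by (induction t arbitrary: f) (auto simp: pred_upr_image image_Un faF_renF)

lemma faT_renV: "faT (renV f t) = faT t"
  by (induction t arbitrary: f) auto

lemma faT_subst: "faT (substV \<sigma> t) \<subseteq> faT t \<union> (\<Union>i. faT (\<sigma> i))"
proof (induction t arbitrary: \<sigma>)
  case (Lam t)
  have "faT (substV (\<lambda>i. case i of 0 \<Rightarrow> Var 0 | Suc j \<Rightarrow> renV Suc (\<sigma> j)) t)
     \<subseteq> faT t \<union> (\<Union>i. faT ((\<lambda>i. case i of 0 \<Rightarrow> Var 0 | Suc j \<Rightarrow> renV Suc (\<sigma> j)) i))"
    by (rule Lam.IH)
  also have "\<dots> \<subseteq> faT t \<union> (\<Union>i. faT (\<sigma> i))"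
    by (auto simp: faT_renV split: nat.splits)
  finally show ?case by simp
next
  case (TLam t)
  have "faT (substV (\<lambda>i. renT Suc (\<sigma> i)) t) \<subseteq> faT t \<union> (\<Union>i. faT (renT Suc (\<sigma> i)))"
    by (rule TLam.IH)
  then show ?case by (auto simp: faT_renT)
qed auto

lemma beta_faT: "beta t t' \<Longrightarrow> faT t' \<subseteq> faT t"
proof (induction rule: beta.induct)
  case (bLam t s)
  have "faT (substV (\<lambda>i. case i of 0 \<Rightarrow> s | Suc j \<Rightarrow> Var j) t) \<subseteq> faT t \<union> (\<Union>i. faT ((\<lambda>i. case i of 0 \<Rightarrow> s | Suc j \<Rightarrow> Var j) i))"
    by (rule faT_subst)
  also have "\<dots> \<subseteq> faT t \<union> faT s" by (auto split: nat.splits)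
  finally show ?case by simp
next
  case (bTLam t Y)
  show ?case by (auto simp: faT_renT split: nat.splits)
qed auto

lemma betas_faT: "betas t t' \<Longrightarrow> faT t' \<subseteq> faT t"
  by (induction rule: rtranclp_induct) (auto dest: beta_faT)

lemma renF_agree: "(\<forall>n\<in>faF A. f n = g n) \<Longrightarrow> renF f A = renF g A"
proof (induction A arbitrary: f g)
  case (All A)
  have "\<forall>n\<in>faF A. upr f n = upr g n"
  proof
    fix n assume "n \<in> faF A" then show "upr f n = upr g n" using All.prems by (cases n) auto
  qed
  then show ?case using All.IH by simp
qed auto

lemma renT_agree: "(\<forall>n\<in>faT t. f n = g n) \<Longrightarrow> renT f t = renT g t"
proof (induction t arbitrary: f g)
  case (TLam t)
  have "\<forall>n\<in>faT t. upr f n = upr g n"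
  proof
    fix n assume "n \<in> faT t" then show "upr f n = upr g n" using TLam.prems by (cases n) auto
  qed
  then show ?case using TLam.IH by simp
qed (auto intro: renF_agree)

lemma ptd_renV: "ptd S d (renV f t) = ptd S d t"
  by (induction t arbitrary: f d) auto

lemma ptd_renT: "ptd S d t \<Longrightarrow> (\<forall>X\<ge>d. d' \<le> f X \<and> f X - d' = X - d) \<Longrightarrow> ptd S d' (renT f t)"
proof (induction t arbitrary: f d d')
  case (Const A)
  then show ?case by auto
next
  case (TLam t)
  have "\<forall>X\<ge>Suc d. Suc d' \<le> upr f X \<and> upr f X - Suc d' = X - Suc d"
  proof (intro allI impI)
    fix X assume "Suc d \<le> X"
    then obtain m where "X = Suc m" "d \<le> m" by (cases X) auto
    then show "Suc d' \<le> upr f X \<and> upr f X - Suc d' = X - Suc d" using TLam.prems(2) by auto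
  qed
  then show ?case using TLam by simp
qed auto

lemma ptd_subst: "ptd S d t \<Longrightarrow> (\<forall>i. ptd S d (\<sigma> i)) \<Longrightarrow> ptd S d (substV \<sigma> t)"
proof (induction t arbitrary: d \<sigma>)
  case (Lam t)
  have "\<forall>i. ptd S d ((\<lambda>i. case i of 0 \<Rightarrow> Var 0 | Suc j \<Rightarrow> renV Suc (\<sigma> j)) i)"
    using Lam.prems(2) by (auto simp: ptd_renV split: nat.split)
  then show ?case using Lam by simp
next
  case (TLam t)
  have "\<forall>i. ptd S (Suc d) (renT Suc (\<sigma> i))"
    using TLam.prems(2) by (auto intro!: ptd_renT)
  then show ?case using TLam by simp
qed auto

lemma beta_ptd: "beta t t' \<Longrightarrow> ptd S d t \<Longrightarrow> ptd S d t'"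
proof (induction arbitrary: d rule: beta.induct)
  case (bLam t s)
  then show ?case by (auto intro!: ptd_subst split: nat.split)
next
  case (bTLam t Y)
  then show ?case by (auto intro!: ptd_renT split: nat.split)
qed auto

lemma betas_ptd: "betas t t' \<Longrightarrow> ptd S d t \<Longrightarrow> ptd S d t'"
  by (induction rule: rtranclp_induct) (auto dest: beta_ptd)


lemma betas_App1: "betas t t' \<Longrightarrow> betas (App t s) (App t' s)"
  by (induction rule: rtranclp_induct) (auto intro: rtranclp.rtrancl_into_rtrancl beta.intros)
lemma betas_App2: "betas s s' \<Longrightarrow> betas (App t s) (App t s')"
  by (induction rule: rtranclp_induct) (auto intro: rtranclp.rtrancl_into_rtrancl beta.intros)
lemma betas_TApp: "betas t t' \<Longrightarrow> betas (TApp t Y) (TApp t' Y)"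
  by (induction rule: rtranclp_induct) (auto intro: rtranclp.rtrancl_into_rtrancl beta.intros)
lemma betas_Lam: "betas t t' \<Longrightarrow> betas (Lam t) (Lam t')"
  by (induction rule: rtranclp_induct) (auto intro: rtranclp.rtrancl_into_rtrancl beta.intros)
lemma betas_TLam: "betas t t' \<Longrightarrow> betas (TLam t) (TLam t')"
  by (induction rule: rtranclp_induct) (auto intro: rtranclp.rtrancl_into_rtrancl beta.intros)

fun neutral :: "trm \<Rightarrow> bool" where
  "neutral (Var i) = True"
| "neutral (Const A) = True"
| "neutral (App t s) = neutral t"
| "neutral (TApp t Y) = neutral t"
| "neutral (Lam t) = False"
| "neutral (TLam t) = False"

lemma neutral_normal: "normal t \<Longrightarrow> typing \<Gamma> t A \<Longrightarrow> (\<forall>u. t \<noteq> Lam u) \<Longrightarrow> (\<forall>u. t \<noteq> TLam u) \<Longrightarrow> neutral t"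
proof (induction t arbitrary: A)
  case (App t1 t2)
  from App.prems(2) obtain B where "typing \<Gamma> t1 (Imp B A)" by auto
  then have "\<forall>u. t1 \<noteq> TLam u" by auto
  then show ?case using App by auto
next
  case (TApp t1 Y)
  from TApp.prems(2) obtain B where "typing \<Gamma> t1 (All B)" by auto
  then have "\<forall>u. t1 \<noteq> Lam u" by auto
  then show ?case using TApp by auto
qed auto

lemma faF_instF: "faF (instF Y A) \<subseteq> insert Y (faF (All A))"
  unfolding instF_def faF_renF by (auto split: nat.splits)

lemma neutral_faF: "neutral n \<Longrightarrow> typing [] n A \<Longrightarrow> faF A \<subseteq> faT n"
proof (induction n arbitrary: A)
  case (App t1 t2)
  from App.prems(2) obtain B where "typing [] t1 (Imp B A)" by auto
  with App show ?case by force
next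
  case (TApp t1 Y)
  from TApp.prems(2) obtain B where "typing [] t1 (All B)" "A = instF Y B" by auto
  with TApp show ?case using faF_instF[of Y B] by force
qed auto

lemma App_analysis: "betas (App t s) u \<Longrightarrow> (\<forall>s'. \<not> beta s s') \<Longrightarrow>
   (\<exists>t'. betas t t' \<and> u = App t' s) \<or>
   (\<exists>r. betas t (Lam r) \<and> betas (substV (\<lambda>i. case i of 0 \<Rightarrow> s | Suc j \<Rightarrow> Var j) r) u)"
proof (induction rule: rtranclp_induct)
  case base
  then show ?case by blast
next
  case (step y z)
  from step.IH[OF step.prems] show ?case
  proof
    assume "\<exists>t'. betas t t' \<and> y = App t' s"
    then obtain t' where t': "betas t t'" "y = App t' s" by blast
    from step.hyps(2)[unfolded t'(2)] show ?thesis
    proof (cases rule: betaE_App)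
      case (bLam r)
      then show ?thesis using t' by blast
    next
      case (cAppL t'')
      then have "betas t t''" using t' by (meson rtranclp.rtrancl_into_rtrancl)
      then show ?thesis using cAppL by blast
    next
      case (cAppR s')
      then show ?thesis using step.prems by blast
    qed
  next
    assume "\<exists>r. betas t (Lam r) \<and> betas (substV (\<lambda>i. case i of 0 \<Rightarrow> s | Suc j \<Rightarrow> Var j) r) y"
    then show ?thesis using step.hyps(2) by (meson rtranclp.rtrancl_into_rtrancl)
  qed
qed

lemma TApp_analysis: "betas (TApp t Y) u \<Longrightarrow>
   (\<exists>t'. betas t t' \<and> u = TApp t' Y) \<or>
   (\<exists>r. betas t (TLam r) \<and> betas (renT (\<lambda>n. case n of 0 \<Rightarrow> Y | Suc m \<Rightarrow> m) r) u)"
proof (induction rule: rtranclp_induct)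
  case base
  then show ?case by blast
next
  case (step y z)
  from step.IH show ?case
  proof
    assume "\<exists>t'. betas t t' \<and> y = TApp t' Y"
    then obtain t' where t': "betas t t'" "y = TApp t' Y" by blast
    from step.hyps(2)[unfolded t'(2)] show ?thesis
    proof (cases rule: betaE_TApp)
      case (bTLam r)
      then show ?thesis using t' by blast
    next
      case (cTApp t'')
      then have "betas t t''" using t' by (meson rtranclp.rtrancl_into_rtrancl)
      then show ?thesis using cTApp by blast
    qed
  next
    assume "\<exists>r. betas t (TLam r) \<and> betas (renT (\<lambda>n. case n of 0 \<Rightarrow> Y | Suc m \<Rightarrow> m) r) y"
    then show ?thesis using step.hyps(2) by (meson rtranclp.rtrancl_into_rtrancl)
  qed
qed

lemma qEc_back: "betas t t' \<Longrightarrow> qEc A t' \<Longrightarrow> qEc A t"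
proof (induction "size A" arbitrary: A t t' rule: less_induct)
  case less
  show ?case
  proof (cases A)
    case (Atom X)
    then show ?thesis using less.prems by (auto intro: rtranclp_trans)
  next
    case (Imp B C)
    then show ?thesis using less.prems less.hyps[of C] by (auto intro: betas_App1)
  next
    case (All B)
    have "qEc (instF Y B) (TApp t Y)" for Y
      using less.prems less.hyps[of "instF Y B"] All by (auto intro: betas_TApp)
    then show ?thesis using All by simp
  qed
qed


lemma inert_sub0_Const: "inert (\<lambda>i. case i of 0 \<Rightarrow> Const B | Suc j \<Rightarrow> Var j)"
  unfolding inert_def by (auto split: nat.split)

lemma okS_sub0_Const: "okS [B] [] (\<lambda>i. case i of 0 \<Rightarrow> Const B | Suc j \<Rightarrow> Var j)"
  unfolding okS_def by (auto split: nat.split)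

definition gY :: "nat \<Rightarrow> nat \<Rightarrow> nat" where
  "gY Y = (\<lambda>n. if n = Y then 0 else Suc n)"

lemma gY_instF: "Y \<notin> faF (All B) \<Longrightarrow> renF (gY Y) (instF Y B) = B"
proof -
  assume H: "Y \<notin> faF (All B)"
  have "renF (gY Y) (instF Y B) = renF (\<lambda>n. gY Y (case n of 0 \<Rightarrow> Y | Suc m \<Rightarrow> m)) B"
    unfolding instF_def renF_comp ..
  also have "\<dots> = renF (\<lambda>n. n) B"
  proof (rule renF_agree, rule ballI)
    fix n assume "n \<in> faF B"
    with H show "gY Y (case n of 0 \<Rightarrow> Y | Suc m \<Rightarrow> m) = n"
      by (cases n) (auto simp: gY_def)
  qed
  finally show ?thesis by (simp add: renF_id)
qed

lemma key: "\<forall>t. (qEc A t \<longrightarrow> (\<exists>s. betas t s \<and> normal s \<and> typing [] s A)) \<and>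
                (neutral t \<and> normal t \<and> typing [] t A \<longrightarrow> qEc A t)"
proof (induction "size A" arbitrary: A rule: less_induct)
  case less
  show ?case
  proof (cases A)
    case (Atom X)
    then show ?thesis by auto
  next
    case (Imp B C)
    have IHB: "\<And>t. qEc B t \<Longrightarrow> (\<exists>s. betas t s \<and> normal s \<and> typing [] s B)"
         "\<And>t. neutral t \<Longrightarrow> normal t \<Longrightarrow> typing [] t B \<Longrightarrow> qEc B t"
      using less.hyps[of B] Imp by auto
    have IHC: "\<And>t. qEc C t \<Longrightarrow> (\<exists>s. betas t s \<and> normal s \<and> typing [] s C)"
         "\<And>t. neutral t \<Longrightarrow> normal t \<Longrightarrow> typing [] t C \<Longrightarrow> qEc C t"
      using less.hyps[of C] Imp by auto
    show ?thesis
    proof (intro allI conjI impI)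
      fix t assume "qEc A t"
      have "qEc B (Const B)" by (rule IHB(2)) (auto intro: typing.tConst)
      moreover have "closed (Const B)" by (simp add: closed_def)
      ultimately have "qEc C (App t (Const B))" using \<open>qEc A t\<close> Imp by simp
      from IHC(1)[OF this] obtain u where u: "betas (App t (Const B)) u" "normal u" "typing [] u C" by blast
      have nb: "\<forall>s'. \<not> beta (Const B) s'" by auto
      from App_analysis[OF u(1) nb] show "\<exists>s. betas t s \<and> normal s \<and> typing [] s A"
      proof
        assume "\<exists>t'. betas t t' \<and> u = App t' (Const B)"
        then obtain t' where t': "betas t t'" "u = App t' (Const B)" by blast
        from u(3) t'(2) have "typing [] (App t' (Const B)) C" by simp
        then have "typing [] t' (Imp B C)" by (auto elim!: tyE_App tyE_Const)
        then show ?thesis using t' u(2) Imp by auto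
      next
        assume "\<exists>r. betas t (Lam r) \<and> betas (substV (\<lambda>i. case i of 0 \<Rightarrow> Const B | Suc j \<Rightarrow> Var j) r) u"
        then obtain r where r: "betas t (Lam r)" "betas (substV (\<lambda>i. case i of 0 \<Rightarrow> Const B | Suc j \<Rightarrow> Var j) r) u"
          by blast
        from betas_subst_lift[OF r(2) inert_sub0_Const] obtain r' where
          r': "betas r r'" "u = substV (\<lambda>i. case i of 0 \<Rightarrow> Const B | Suc j \<Rightarrow> Var j) r'" by blast
        have "normal r'" using u(2) r'(2) normal_subst by blast
        have "typing [B] r' C" using rev_typing[OF _ okS_sub0_Const] u(3) r'(2) by blast
        then have "typing [] (Lam r') A" using Imp by (auto intro: typing.tLam)
        moreover have "betas t (Lam r')" using r(1) betas_Lam[OF r'(1)] by (rule rtranclp_trans)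
        ultimately show ?thesis using \<open>normal r'\<close> by (intro exI[of _ "Lam r'"]) simp
      qed
    next
      fix n assume n: "neutral n \<and> normal n \<and> typing [] n A"
      show "qEc A n" unfolding Imp qEc.simps
      proof (intro allI impI)
        fix s assume "closed s" "qEc B s"
        from IHB(1)[OF this(2)] obtain s' where s': "betas s s'" "normal s'" "typing [] s' B" by blast
        have "neutral (App n s')" using n by simp
        moreover have "normal (App n s')" using n s' by (cases n) auto
        moreover have "typing [] (App n s') C" using n s' Imp by (auto intro: typing.tApp)
        ultimately have "qEc C (App n s')" by (rule IHC(2))
        then show "qEc C (App n s)" using qEc_back betas_App2[OF s'(1)] by blast
      qed
    qed
  next
    case (All B)
    have IH: "\<And>Y t. qEc (instF Y B) t \<Longrightarrow> (\<exists>s. betas t s \<and> normal s \<and> typing [] s (instF Y B))"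
         "\<And>Y t. neutral t \<Longrightarrow> normal t \<Longrightarrow> typing [] t (instF Y B) \<Longrightarrow> qEc (instF Y B) t"
      using less.hyps[of "instF _ B"] All by auto
    show ?thesis
    proof (intro allI conjI impI)
      fix t assume "qEc A t"
      have "finite (faT t \<union> faF (All B))" using finite_faT[of t] finite_faF[of "All B"] by blast
      then obtain Y where Y: "Y \<notin> faT t \<union> faF (All B)"
        using ex_new_if_finite[OF infinite_UNIV_nat] by blast
      have "qEc (instF Y B) (TApp t Y)" using \<open>qEc A t\<close> All by simp
      from IH(1)[OF this] obtain u where u: "betas (TApp t Y) u" "normal u" "typing [] u (instF Y B)" by blast
      from TApp_analysis[OF u(1)] show "\<exists>s. betas t s \<and> normal s \<and> typing [] s A"
      proof
        assume "\<exists>t'. betas t t' \<and> u = TApp t' Y"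
        then obtain t' where t': "betas t t'" "u = TApp t' Y" by blast
        from u(3) t'(2) obtain B' where B': "typing [] t' (All B')" "instF Y B' = instF Y B" by auto
        have "normal t'" "\<forall>v. t' \<noteq> TLam v" using u(2) t'(2) by auto
        moreover have "\<forall>v. t' \<noteq> Lam v" using B'(1) by auto
        ultimately have "neutral t'" using neutral_normal B'(1) by blast
        then have "faF (All B') \<subseteq> faT t'" using neutral_faF B'(1) by blast
        also have "\<dots> \<subseteq> faT t" using betas_faT[OF t'(1)] .
        finally have "Y \<notin> faF (All B')" using Y by blast
        then have "B' = B" using gY_instF[of Y B'] gY_instF[of Y B] Y B'(2) by auto
        then show ?thesis using t' \<open>normal t'\<close> B'(1) All by auto
      next
        assume "\<exists>r. betas t (TLam r) \<and> betas (renT (\<lambda>n. case n of 0 \<Rightarrow> Y | Suc m \<Rightarrow> m) r) u"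
        then obtain r where r: "betas t (TLam r)" "betas (renT (\<lambda>n. case n of 0 \<Rightarrow> Y | Suc m \<Rightarrow> m) r) u"
          by blast
        from betas_renT_lift[OF r(2)] obtain r' where
          r': "betas r r'" "u = renT (\<lambda>n. case n of 0 \<Rightarrow> Y | Suc m \<Rightarrow> m) r'" by blast
        have "normal r'" using u(2) r'(2) normal_renT by blast
        have fr: "faT r' \<subseteq> faT r" by (rule betas_faT[OF r'(1)])
        have ft: "faT (TLam r) \<subseteq> faT t" by (rule betas_faT[OF r(1)])
        from typing_renT[OF u(3), of "gY Y"] have
          "typing [] (renT (gY Y) (renT (\<lambda>n. case n of 0 \<Rightarrow> Y | Suc m \<Rightarrow> m) r')) B"
          using r'(2) gY_instF[of Y B] Y by simp
        moreover have "renT (gY Y) (renT (\<lambda>n. case n of 0 \<Rightarrow> Y | Suc m \<Rightarrow> m) r') = r'"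
        proof -
          have "renT (gY Y) (renT (\<lambda>n. case n of 0 \<Rightarrow> Y | Suc m \<Rightarrow> m) r')
              = renT (\<lambda>n. gY Y (case n of 0 \<Rightarrow> Y | Suc m \<Rightarrow> m)) r'" by (rule renT_comp)
          also have "\<dots> = renT (\<lambda>n. n) r'"
          proof (rule renT_agree, rule ballI)
            fix n assume "n \<in> faT r'"
            with fr ft Y show "gY Y (case n of 0 \<Rightarrow> Y | Suc m \<Rightarrow> m) = n"
              by (cases n) (auto simp: gY_def)
          qed
          finally show ?thesis by (simp add: renT_id)
        qed
        ultimately have "typing [] r' B" by simp
        then have "typing [] (TLam r') A" using All typing.tTLam[of "[]" r' B] by simp
        moreover have "betas t (TLam r')" using r(1) betas_TLam[OF r'(1)] by (rule rtranclp_trans)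
        ultimately show ?thesis using \<open>normal r'\<close> by (intro exI[of _ "TLam r'"]) simp
      qed
    next
      fix n assume n: "neutral n \<and> normal n \<and> typing [] n A"
      show "qEc A n" unfolding All qEc.simps
      proof
        fix Y
        have "neutral (TApp n Y)" using n by simp
        moreover have "normal (TApp n Y)" using n by (cases n) auto
        moreover have "typing [] (TApp n Y) (instF Y B)" using n All by (auto intro: typing.tTApp)
        ultimately show "qEc (instF Y B) (TApp n Y)" by (rule IH(2))
      qed
    qed
  qed
qed

theorem mainTheorem1:
  fixes S :: "nat set" and \<Gamma> :: "form list" and t :: trm and A :: form
  assumes "tfv t \<subseteq> {..<length \<Gamma>}"
    and "Evalid S \<Gamma> t A"
  shows "\<exists>s. normal s \<and> proof_term S s \<and> betas t s \<and> typing \<Gamma> s A"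
proof -
  from assms(2) have pt: "proof_term S t" and v: "qEv \<Gamma> t A" unfolding Evalid_def by auto
  define ts where "ts = map Const \<Gamma>"
  define \<sigma> where "\<sigma> = (\<lambda>i. if i < length ts then ts ! i else Var i)"
  have "\<forall>i<length \<Gamma>. closed (ts ! i) \<and> qEc (\<Gamma> ! i) (ts ! i)"
  proof (intro allI impI conjI)
    fix i assume "i < length \<Gamma>"
    then show "closed (ts ! i)" by (simp add: ts_def closed_def)
    have "typing [] (Const (\<Gamma> ! i)) (\<Gamma> ! i)" by (rule typing.tConst)
    then show "qEc (\<Gamma> ! i) (ts ! i)" using key[of "\<Gamma> ! i"] \<open>i < length \<Gamma>\<close>
      by (simp add: ts_def)
  qed
  then have "qEc A (substV \<sigma> t)" using v unfolding qEv_def \<sigma>_def by (auto simp: ts_def)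
  then obtain u where u: "betas (substV \<sigma> t) u" "normal u" "typing [] u A" using key[of A] by blast
  have "inert \<sigma>" unfolding inert_def \<sigma>_def ts_def by auto
  from betas_subst_lift[OF u(1) this] obtain s where s: "betas t s" "u = substV \<sigma> s" by blast
  have "normal s" using u(2) s(2) normal_subst by blast
  have "okS \<Gamma> [] \<sigma>" unfolding okS_def \<sigma>_def ts_def by auto
  then have "typing \<Gamma> s A" using rev_typing u(3) s(2) by blast
  moreover have "proof_term S s" using pt betas_ptd[OF s(1)] unfolding proof_term_def by blast
  ultimately show ?thesis using s(1) \<open>normal s\<close> by blast
qed

end
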